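(* Let $0\le t_1<t_2<+\infty$, $r:=\frac{t_2-t_1}2$, $x_0:=\frac{t_1+t_2}2$. For all $z$ with $\operatorname{Im}z\ge0$: $\omega(z,[t_1,t_2])\le1$ if $z\in D(x_0,r)\cup\{t_1,t_2\}$; $\omega(z,[t_1,t_2])\le\frac12$ if $\operatorname{Im}z>0$ and $|z-x_0|=r$; and $\omega(z,[t_1,t_2])\le\frac1\pi\arctan\frac{2r|z-x_0|}{|z-x_0|^2-r^2}$ if $|z-x_0|>r$. These bounds are sharp on each semicircle: for every $t\ge0$ there is a point $z$ with $\operatorname{Im}z\ge0$, $|z-x_0|=t$, at which equality holds in the applicable bound. Moreover, for all $z$ with $\operatorname{Im}z>0$ and $|z-x_0|<r$, $$\omega(z,[t_1,t_2])\ge1-\frac1\pi\arctan\frac{2r|z-x_0|}{r^2-|z-x_0|^2}\ge1-\frac1\pi\frac{2r|z-x_0|}{r^2-|z-x_0|^2}.$$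
   Context: For $z$ with $\operatorname{Im}z>0$ and Borel $B\subset\mathbb{R}$, $\omega(z,B)=\frac1\pi\int_B\frac{\operatorname{Im}z}{(t-\operatorname{Re}z)^2+(\operatorname{Im}z)^2}dt$ is the harmonic measure of the upper half-plane; for $x\in\mathbb{R}$, $\omega(x,B)$ is the Dirac measure $\delta_x(B)$. $D(x_0,r)$ is the open disc of centre $x_0$ and radius $r$. *)

theory Defs
  imports "HOL-Analysis.Analysis"
begin

text \<open>Harmonic measure of the upper half-plane: for Im z > 0 the Poisson integral
  over B (Lebesgue integral); for real z the Dirac measure at z.
  (Points with Im z < 0 are never used.)\<close>
definition hmeasure :: "complex \<Rightarrow> real set \<Rightarrow> real" where
  "hmeasure z B =
     (if Im z > 0
      then (1 / pi) * (LINT t:B|lborel. Im z / ((t - Re z)\<^sup>2 + (Im z)\<^sup>2))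
      else indicator B (Re z))"

definition hm_bound :: "real \<Rightarrow> real \<Rightarrow> complex \<Rightarrow> real" where
  "hm_bound t1 t2 z =
     (let r = (t2 - t1) / 2; x0 = (t1 + t2) / 2; d = cmod (z - complex_of_real x0) in
      if z \<in> ball (complex_of_real x0) r \<union> {complex_of_real t1, complex_of_real t2} then 1
      else if Im z > 0 \<and> d = r then 1 / 2
      else (1 / pi) * arctan (2 * r * d / (d\<^sup>2 - r\<^sup>2)))"

end

theory Submission
  imports Defs
begin

lemma hm_formula:
  fixes t1 t2 :: real assumes "t1 \<le> t2" "Im z > 0"
  shows "hmeasure z {t1..t2} = (arctan ((t2 - Re z)/Im z) - arctan ((t1 - Re z)/Im z)) / pi"
proof -
  define x y where "x = Re z" "y = Im z"
  have y: "y > 0" using assms x_y_def by auto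
  have "(\<integral>t. (y / ((t - x)\<^sup>2 + y\<^sup>2)) * indicator {t1..t2} t \<partial>lborel)
      = arctan ((t2 - x)/y) - arctan ((t1 - x)/y)"
  proof (rule integral_FTC_Icc_real[OF assms(1)])
    fix t
    show "((\<lambda>t. arctan ((t - x)/y)) has_real_derivative y / ((t - x)\<^sup>2 + y\<^sup>2)) (at t)"
    proof (rule DERIV_cong)
      show "((\<lambda>t. arctan ((t - x)/y)) has_real_derivative inverse (1 + ((t-x)/y)\<^sup>2) * (1/y)) (at t)"
        using y by (auto intro!: derivative_eq_intros)
      show "inverse (1 + ((t-x)/y)\<^sup>2) * (1/y) = y / ((t - x)\<^sup>2 + y\<^sup>2)"
        using y by (simp add: field_simps power2_eq_square)
    qed
    have "(t - x)\<^sup>2 + y\<^sup>2 \<noteq> 0" using y by (simp add: add_nonneg_pos)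
    then show "isCont (\<lambda>t. y / ((t - x)\<^sup>2 + y\<^sup>2)) t"
      by (intro continuous_intros) auto
  qed
  then show ?thesis using assms unfolding hmeasure_def set_lebesgue_integral_def x_y_def
    by (simp add: mult.commute)
qed

lemma cos_pos_iff: "0 < th \<Longrightarrow> th < pi \<Longrightarrow> (cos th > 0 \<longleftrightarrow> th < pi/2)"
proof -
  assume a: "0 < th" "th < pi"
  show ?thesis
  proof
    assume "th < pi/2" then show "cos th > 0" using a by (intro cos_gt_zero_pi) auto
  next
    assume c: "cos th > 0"
    show "th < pi/2"
    proof (rule ccontr)
      assume "\<not> th < pi/2"
      then have "cos (pi - th) \<ge> 0" using a by (intro cos_ge_zero) auto
      then show False using c by simp
    qed
  qed
qed

lemma cos_neg_iff: "0 < th \<Longrightarrow> th < pi \<Longrightarrow> (cos th < 0 \<longleftrightarrow> th > pi/2)"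
proof -
  assume a: "0 < th" "th < pi"
  have "cos (pi - th) > 0 \<longleftrightarrow> pi - th < pi/2" using a by (intro cos_pos_iff) auto
  then show ?thesis by auto
qed

lemma arctan_diff:
  fixes a b :: real assumes "b < a"
  defines "th \<equiv> arctan a - arctan b"
  shows "0 < th" "th < pi"
    "1 + a*b > 0 \<Longrightarrow> th = arctan ((a-b)/(1+a*b))"
    "1 + a*b < 0 \<Longrightarrow> th = pi - arctan ((a-b)/(-(1+a*b)))"
    "1 + a*b = 0 \<Longrightarrow> th = pi/2"
proof -
  show p0: "0 < th" using assms arctan_less_iff by auto
  show p1: "th < pi" unfolding th_def using arctan_bounded[of a] arctan_bounded[of b] by linarith
  define ca cb where "ca = cos (arctan a)" "cb = cos (arctan b)"
  have ca: "ca > 0" "cb > 0" unfolding ca_cb_def by (simp_all add: cos_arctan add_pos_nonneg)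
  have sa: "sin (arctan a) = a * ca" "sin (arctan b) = b * cb"
    unfolding ca_cb_def by (simp_all add: cos_arctan sin_arctan)
  have s: "sin th = ca * cb * (a - b)" unfolding th_def sin_diff sa ca_cb_def[symmetric]
    by (simp add: algebra_simps)
  have c: "cos th = ca * cb * (1 + a * b)" unfolding th_def cos_diff sa ca_cb_def[symmetric]
    by (simp add: algebra_simps)
  have t: "tan th = (a - b) / (1 + a*b)" unfolding tan_def s c using ca by simp
  show "1 + a*b > 0 \<Longrightarrow> th = arctan ((a-b)/(1+a*b))"
  proof -
    assume h: "1 + a*b > 0"
    then have "cos th > 0" using c ca by simp
    then have "th < pi/2" using cos_pos_iff p0 p1 by blast
    then show ?thesis using p0 arctan_tan[of th] t by simp
  qed
  show "1 + a*b < 0 \<Longrightarrow> th = pi - arctan ((a-b)/(-(1+a*b)))"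
  proof -
    assume h: "1 + a*b < 0"
    then have "cos th < 0" using c ca by (simp add: mult_pos_neg)
    then have "th > pi/2" using cos_neg_iff p0 p1 by blast
    moreover have "tan (pi - th) = (a-b)/(-(1+a*b))" 
    proof -
      have "tan (pi - th) = - tan th" by (simp add: tan_def)
      then have "tan (pi - th) = -((a-b)/(1+a*b))" using t by simp
      then show ?thesis by (metis minus_divide_right)
    qed
    ultimately have "arctan ((a-b)/(-(1+a*b))) = pi - th" using p1 arctan_tan[of "pi - th"] by simp
    then show ?thesis by simp
  qed
  show "1 + a*b = 0 \<Longrightarrow> th = pi/2"
  proof -
    assume "1 + a*b = 0"
    then have "cos th = 0" using c by simp
    then show ?thesis using cos_pos_iff[OF p0 p1] cos_neg_iff[OF p0 p1] by (metis less_irrefl linorder_neqE_linordered_idom)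
  qed
qed

lemma key:
  fixes t1 t2 r x0 :: real
  assumes "t1 < t2" "r = (t2 - t1) / 2" "x0 = (t1 + t2) / 2" "Im z > 0"
  defines "d \<equiv> cmod (z - complex_of_real x0)"
  shows "0 < hmeasure z {t1..t2}" "hmeasure z {t1..t2} < 1"
    "d > r \<Longrightarrow> hmeasure z {t1..t2} = arctan (2 * r * Im z / (d\<^sup>2 - r\<^sup>2)) / pi"
    "d < r \<Longrightarrow> hmeasure z {t1..t2} = 1 - arctan (2 * r * Im z / (r\<^sup>2 - d\<^sup>2)) / pi"
    "d = r \<Longrightarrow> hmeasure z {t1..t2} = 1/2"
proof -
  define x y where "x = Re z" "y = Im z"
  have y: "y > 0" using assms x_y_def by auto
  define a b where "a = (t2 - x)/y" "b = (t1 - x)/y"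
  have ba: "b < a" unfolding a_b_def using y assms(1) by (simp add: divide_strict_right_mono)
  have hm: "hmeasure z {t1..t2} = (arctan a - arctan b) / pi"
    unfolding a_b_def x_y_def using hm_formula[of t1 t2 z] assms by simp
  have d2: "d\<^sup>2 = (x - x0)\<^sup>2 + y\<^sup>2" unfolding d_def x_y_def cmod_power2 by simp
  have ab: "1 + a * b = (d\<^sup>2 - r\<^sup>2) / y\<^sup>2"
    unfolding a_b_def d2 assms(2,3) using y by (simp add: field_simps power2_eq_square)
  have amb: "a - b = 2 * r / y" unfolding a_b_def using y assms(2) by (simp add: field_simps)
  note AD = arctan_diff[OF ba]
  show "0 < hmeasure z {t1..t2}" using AD(1) hm by simp
  show "hmeasure z {t1..t2} < 1" using AD(2) hm by simp
  show "d > r \<Longrightarrow> hmeasure z {t1..t2} = arctan (2 * r * Im z / (d\<^sup>2 - r\<^sup>2)) / pi"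
  proof -
    assume h: "d > r"
    have r0: "r > 0" using assms by simp
    have "d\<^sup>2 > r\<^sup>2" using h r0 by (simp add: power_strict_mono)
    then have p: "1 + a*b > 0" using ab y by simp
    have "(a-b)/(1+a*b) = 2 * r * Im z / (d\<^sup>2 - r\<^sup>2)"
      unfolding ab amb using y \<open>d\<^sup>2 > r\<^sup>2\<close> x_y_def by (simp add: field_simps power2_eq_square)
    then show ?thesis using AD(3)[OF p] hm by simp
  qed
  show "d < r \<Longrightarrow> hmeasure z {t1..t2} = 1 - arctan (2 * r * Im z / (r\<^sup>2 - d\<^sup>2)) / pi"
  proof -
    assume h: "d < r"
    have d0: "d \<ge> 0" unfolding d_def by simp
    have "d\<^sup>2 < r\<^sup>2" using h d0 by (simp add: power_strict_mono)
    then have p: "1 + a*b < 0" using ab y by (simp add: divide_neg_pos)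
    have "(a-b)/(-(1+a*b)) = 2 * r * Im z / (r\<^sup>2 - d\<^sup>2)"
      unfolding ab amb using y \<open>d\<^sup>2 < r\<^sup>2\<close> x_y_def by (simp add: field_simps power2_eq_square)
    then show ?thesis using AD(4)[OF p] hm by (simp add: diff_divide_distrib)
  qed
  show "d = r \<Longrightarrow> hmeasure z {t1..t2} = 1/2"
  proof -
    assume h: "d = r"
    then have p: "1 + a*b = 0" using ab by simp
    then show ?thesis using AD(5)[OF p] hm by simp
  qed
qed

theorem proposition9:
  fixes t1 t2 r x0 :: real
  assumes "0 \<le> t1" and "t1 < t2"
    and r_def: "r = (t2 - t1) / 2" and x0_def: "x0 = (t1 + t2) / 2"
  shows
    "(\<forall>z. Im z \<ge> 0 \<and> z \<in> ball (complex_of_real x0) r \<union> {complex_of_real t1, complex_of_real t2}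
          \<longrightarrow> hmeasure z {t1..t2} \<le> 1)
   \<and> (\<forall>z. Im z > 0 \<and> cmod (z - complex_of_real x0) = r \<longrightarrow> hmeasure z {t1..t2} \<le> 1 / 2)
   \<and> (\<forall>z. Im z \<ge> 0 \<and> cmod (z - complex_of_real x0) > r \<longrightarrow>
          hmeasure z {t1..t2} \<le> (1 / pi) * arctan (2 * r * cmod (z - complex_of_real x0)
                                   / ((cmod (z - complex_of_real x0))\<^sup>2 - r\<^sup>2)))
   \<and> (\<forall>t \<ge> 0. \<exists>z. Im z \<ge> 0 \<and> cmod (z - complex_of_real x0) = t
          \<and> hmeasure z {t1..t2} = hm_bound t1 t2 z)
   \<and> (\<forall>z. Im z > 0 \<and> cmod (z - complex_of_real x0) < r \<longrightarrow>
          1 - (1 / pi) * arctan (2 * r * cmod (z - complex_of_real x0)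
                 / (r\<^sup>2 - (cmod (z - complex_of_real x0))\<^sup>2)) \<le> hmeasure z {t1..t2}
        \<and> 1 - (1 / pi) * (2 * r * cmod (z - complex_of_real x0)
                 / (r\<^sup>2 - (cmod (z - complex_of_real x0))\<^sup>2))
            \<le> 1 - (1 / pi) * arctan (2 * r * cmod (z - complex_of_real x0)
                 / (r\<^sup>2 - (cmod (z - complex_of_real x0))\<^sup>2)))"
proof (intro conjI allI impI)
  note K = key[OF assms(2) r_def x0_def]
  have hb: "hm_bound t1 t2 z = (if z \<in> ball (complex_of_real x0) r \<union> {complex_of_real t1, complex_of_real t2} then 1
      else if Im z > 0 \<and> cmod (z - complex_of_real x0) = r then 1 / 2
      else (1 / pi) * arctan (2 * r * cmod (z - complex_of_real x0) / ((cmod (z - complex_of_real x0))\<^sup>2 - r\<^sup>2)))" for z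
    unfolding hm_bound_def Let_def r_def x0_def by simp
  have r0: "r > 0" using assms by simp
  have imle: "Im z \<le> cmod (z - complex_of_real x0)" for z
    using abs_Im_le_cmod[of "z - complex_of_real x0"] by simp
  have real_hm: "Im z = 0 \<Longrightarrow> hmeasure z B = indicator B (Re z)" for z B
    unfolding hmeasure_def by simp
  show "hmeasure z {t1..t2} \<le> 1"
    if "0 \<le> Im z \<and> z \<in> ball (complex_of_real x0) r \<union> {complex_of_real t1, complex_of_real t2}" for z
  proof (cases "Im z > 0")
    case True then show ?thesis using K(2) by (simp add: less_imp_le)
  next
    case False then have "Im z = 0" using that by simp
    then show ?thesis using real_hm by (simp add: indicator_def)
  qed
  show "hmeasure z {t1..t2} \<le> 1 / 2"
    if "0 < Im z \<and> cmod (z - complex_of_real x0) = r" for z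
    using K(5) that by simp
  show "hmeasure z {t1..t2} \<le> (1 / pi) * arctan (2 * r * cmod (z - complex_of_real x0)
                                   / ((cmod (z - complex_of_real x0))\<^sup>2 - r\<^sup>2))"
    if h: "0 \<le> Im z \<and> r < cmod (z - complex_of_real x0)" for z
  proof -
    define d where "d = cmod (z - complex_of_real x0)"
    have "d\<^sup>2 > r\<^sup>2" using h r0 d_def by (simp add: power_strict_mono)
    have dr: "d\<^sup>2 - r\<^sup>2 > 0" using \<open>d\<^sup>2 > r\<^sup>2\<close> by simp
    have d0: "d \<ge> 0" unfolding d_def by simp
    show ?thesis
    proof (cases "Im z > 0")
      case True
      have "2 * r * Im z / (d\<^sup>2 - r\<^sup>2) \<le> 2 * r * d / (d\<^sup>2 - r\<^sup>2)"
        using imle[of z] d_def r0 dr h by (intro divide_right_mono mult_left_mono) auto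
      then have "arctan (2 * r * Im z / (d\<^sup>2 - r\<^sup>2)) \<le> arctan (2 * r * d / (d\<^sup>2 - r\<^sup>2))"
        by (simp add: arctan_le_iff)
      then show ?thesis using K(3)[OF True] h d_def by (simp add: divide_right_mono)
    next
      case False then have "Im z = 0" using h by simp
      have "Re z \<notin> {t1..t2}"
      proof
        assume "Re z \<in> {t1..t2}"
        then have "\<bar>Re z - x0\<bar> \<le> r" using r_def x0_def by auto
        moreover have "cmod (z - complex_of_real x0) = \<bar>Re z - x0\<bar>"
          using \<open>Im z = 0\<close> by (simp add: cmod_def)
        ultimately show False using h by simp
      qed
      then have "hmeasure z {t1..t2} = 0" using real_hm \<open>Im z = 0\<close> by simp
      moreover have "0 \<le> arctan (2 * r * d / (d\<^sup>2 - r\<^sup>2))"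
        using r0 dr d0 unfolding zero_le_arctan_iff by (intro divide_nonneg_pos mult_nonneg_nonneg) auto
      ultimately show ?thesis using d_def by simp
    qed
  qed
  show "\<exists>z. 0 \<le> Im z \<and> cmod (z - complex_of_real x0) = t \<and> hmeasure z {t1..t2} = hm_bound t1 t2 z"
    if t: "0 \<le> t" for t
  proof -
    consider "t < r" | "t = r" | "t > r" by linarith
    then show ?thesis
    proof cases
      case 1
      define z where "z = complex_of_real (x0 + t)"
      have d: "cmod (z - complex_of_real x0) = t" unfolding z_def using t by simp
      have inb: "z \<in> ball (complex_of_real x0) r" unfolding mem_ball dist_norm
        using d 1 by (simp add: norm_minus_commute)
      have "x0 + t \<in> {t1..t2}" using 1 t r_def x0_def by auto
      then have "hmeasure z {t1..t2} = 1" using real_hm[of z] unfolding z_def by simp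
      moreover have "hm_bound t1 t2 z = 1" using inb r_def x0_def unfolding hm_bound_def Let_def by simp
      moreover have "Im z = 0" unfolding z_def by simp
      ultimately show ?thesis using d by (intro exI[of _ z]) simp
    next
      case 2
      define z where "z = complex_of_real t2"
      have d: "cmod (z - complex_of_real x0) = t" 
      proof -
        have "z - complex_of_real x0 = complex_of_real (t2 - x0)" unfolding z_def by simp
        then show ?thesis using 2 r_def x0_def using assms(2) by (simp only: norm_of_real) (simp add: abs_if field_simps)
      qed
      have "hmeasure z {t1..t2} = 1" using real_hm[of z] assms(2) unfolding z_def by simp
      moreover have "hm_bound t1 t2 z = 1" unfolding hm_bound_def Let_def z_def by simp
      moreover have "Im z = 0" unfolding z_def by simp
      ultimately show ?thesis using d by (intro exI[of _ z]) simp
    next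
      case 3
      define z where "z = complex_of_real x0 + \<i> * complex_of_real t"
      have d: "cmod (z - complex_of_real x0) = t" unfolding z_def using t by (simp add: norm_mult)
      have im: "Im z = t" unfolding z_def by simp
      have "hmeasure z {t1..t2} = arctan (2 * r * t / (t\<^sup>2 - r\<^sup>2)) / pi"
        using K(3)[of z] d im 3 r0 by simp
      moreover have "hm_bound t1 t2 z = (1/pi) * arctan (2 * r * t / (t\<^sup>2 - r\<^sup>2))"
      proof -
        have "z \<notin> ball (complex_of_real x0) r" unfolding mem_ball dist_norm
          using d 3 by (simp add: norm_minus_commute)
        moreover have "z \<noteq> complex_of_real t1" "z \<noteq> complex_of_real t2"
          using im 3 r0 by (auto dest: arg_cong[of _ _ Im])
        ultimately show ?thesis unfolding hb using d 3 by simp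
      qed
      ultimately show ?thesis using d im 3 r0 by (intro exI[of _ z]) simp
    qed
  qed
  fix z assume h: "0 < Im z \<and> cmod (z - complex_of_real x0) < r"
  define d where "d = cmod (z - complex_of_real x0)"
  have d0: "d \<ge> 0" unfolding d_def by simp
  have "d\<^sup>2 < r\<^sup>2" using h d0 d_def by (simp add: power_strict_mono)
  have dr: "r\<^sup>2 - d\<^sup>2 > 0" using \<open>d\<^sup>2 < r\<^sup>2\<close> by simp
  have "2 * r * Im z / (r\<^sup>2 - d\<^sup>2) \<le> 2 * r * d / (r\<^sup>2 - d\<^sup>2)"
    using imle[of z] d_def r0 dr h by (intro divide_right_mono mult_left_mono) auto
  then have "arctan (2 * r * Im z / (r\<^sup>2 - d\<^sup>2)) \<le> arctan (2 * r * d / (r\<^sup>2 - d\<^sup>2))"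
    by (simp add: arctan_le_iff)
  then have "arctan (2 * r * Im z / (r\<^sup>2 - d\<^sup>2)) / pi \<le> arctan (2 * r * d / (r\<^sup>2 - d\<^sup>2)) / pi"
    by (simp add: divide_right_mono)
  then show "1 - (1 / pi) * arctan (2 * r * cmod (z - complex_of_real x0)
                 / (r\<^sup>2 - (cmod (z - complex_of_real x0))\<^sup>2)) \<le> hmeasure z {t1..t2}"
    using K(4)[of z] h d_def by simp
  have "arctan (2 * r * d / (r\<^sup>2 - d\<^sup>2)) \<le> 2 * r * d / (r\<^sup>2 - d\<^sup>2)"
    using r0 d0 dr by (intro arctan_le_self divide_nonneg_pos mult_nonneg_nonneg) auto
  then have "arctan (2 * r * d / (r\<^sup>2 - d\<^sup>2)) / pi \<le> (2 * r * d / (r\<^sup>2 - d\<^sup>2)) / pi"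
    by (rule divide_right_mono) simp_all
  then show "1 - (1 / pi) * (2 * r * cmod (z - complex_of_real x0)
                 / (r\<^sup>2 - (cmod (z - complex_of_real x0))\<^sup>2))
            \<le> 1 - (1 / pi) * arctan (2 * r * cmod (z - complex_of_real x0)
                 / (r\<^sup>2 - (cmod (z - complex_of_real x0))\<^sup>2))"
    using d_def by (simp add: mult.commute)
qed
end
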